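(* Let $r\in\mathbb{N}$, let $\Theta$ be a compact parameter set with $\theta^*\in\Theta$, and for each $\theta\in\Theta$ let $f_\theta:\mathbb{N}_0\times\mathbb{R}_+\to\mathbb{R}_+$ be measurable. Suppose there are non-negative constants $a,b$ with $a+b<1$ such that for all $(y,\lambda),(y',\lambda')\in\mathbb{N}_0\times\mathbb{R}_+$, $$\sup_{\theta\in\Theta}\big|f_\theta(y,\lambda)-f_\theta(y',\lambda')\big|\le a|y-y'|+b|\lambda-\lambda'|.$$ Let $\{(Y_t,\lambda_t)\}$ be the strictly stationary solution of $$Y_t\mid\mathcal{F}_{t-1}\sim NB(r,p_t),\qquad r\frac{1-p_t}{p_t}=\lambda_t=f_{\theta^*}(Y_{t-1},\lambda_{t-1}),$$ where $\mathcal{F}_{t-1}=\sigma(Y_{t-1},Y_{t-2},\dots)$. If $$(a+b)^2+\frac{a^2}{r}<1,$$ then $\mathbb{E}(Y_t^2)<\infty$ for all $t\in\mathbb{Z}$.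
   Context: $NB(r,p)$ denotes the negative binomial distribution with parameters $r$ and $p$, having mean $r(1-p)/p$ and variance $r(1-p)/p^2$. *)

theory Defs
  imports "HOL-Probability.Probability"
begin

definition past_sigma :: "'a measure \<Rightarrow> (int \<Rightarrow> 'a \<Rightarrow> nat) \<Rightarrow> int \<Rightarrow> 'a measure" where
  "past_sigma M Y t = sigma (space M) {Y s -` A \<inter> space M | s A. s \<le> t - 1}"

text \<open>Success probability p_t determined by r (1 - p_t)/p_t = lambda_t.\<close>
definition nb_prob :: "nat \<Rightarrow> real \<Rightarrow> real" where
  "nb_prob r l = real r / (real r + l)"

definition strictly_stationary ::
  "'a measure \<Rightarrow> (int \<Rightarrow> 'a \<Rightarrow> nat) \<Rightarrow> (int \<Rightarrow> 'a \<Rightarrow> real) \<Rightarrow> bool" where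
  "strictly_stationary M Y L \<longleftrightarrow>
     (\<forall>h::int.
        distr M (PiM UNIV (\<lambda>_. count_space UNIV \<Otimes>\<^sub>M borel)) (\<lambda>\<omega> i. (Y (i + h) \<omega>, L (i + h) \<omega>))
      = distr M (PiM UNIV (\<lambda>_. count_space UNIV \<Otimes>\<^sub>M borel)) (\<lambda>\<omega> i. (Y i \<omega>, L i \<omega>)))"

end

theory Submission
  imports Defs
begin

lemma measurable_sets_mono:
  assumes "sets N \<subseteq> sets N'" "space N = space N'" "f \<in> measurable N X"
  shows "f \<in> measurable N' X"
  using assms by (auto simp: measurable_def)

locale nbproc =
  fixes M :: "'a measure" and Y :: "int \<Rightarrow> 'a \<Rightarrow> nat" and L :: "int \<Rightarrow> 'a \<Rightarrow> real" and r :: nat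
  assumes prob: "prob_space M"
    and r1: "r \<ge> 1"
    and Y_meas: "\<And>t. Y t \<in> measurable M (count_space UNIV)"
    and L_meas: "\<And>t. L t \<in> borel_measurable M"
    and L_nonneg: "\<And>t \<omega>. \<omega> \<in> space M \<Longrightarrow> L t \<omega> \<ge> 0"
    and L_past: "\<And>t. L t \<in> borel_measurable (past_sigma M Y t)"
    and cond_NB: "\<And>t k A. A \<in> sets (past_sigma M Y t) \<Longrightarrow>
         measure M ({\<omega> \<in> space M. Y t \<omega> = k} \<inter> A)
           = (\<integral>\<omega>. indicator A \<omega> * pmf (neg_binomial_pmf r (nb_prob r (L t \<omega>))) k \<partial>M)"
begin

interpretation P: prob_space M by (rule prob)

lemma gen_sub: "{Y s -` A \<inter> space M | s A. s \<le> t - 1} \<subseteq> Pow (space M)"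
  by auto

lemma space_past[simp]: "space (past_sigma M Y t) = space M"
  unfolding past_sigma_def by (rule space_measure_of) (use gen_sub in blast)

lemma sets_past: "sets (past_sigma M Y t) = sigma_sets (space M) {Y s -` A \<inter> space M | s A. s \<le> t - 1}"
  unfolding past_sigma_def by (rule sets_measure_of) (use gen_sub in blast)

lemma sets_past_sub: "sets (past_sigma M Y t) \<subseteq> sets M"
  unfolding sets_past
proof (rule sets.sigma_sets_subset)
  show "{Y s -` A \<inter> space M | s A. s \<le> t - 1} \<subseteq> sets M"
    using Y_meas by (auto simp: measurable_def)
qed

lemma sets_past_mono: "s \<le> t \<Longrightarrow> sets (past_sigma M Y s) \<subseteq> sets (past_sigma M Y t)"
  unfolding sets_past by (rule sigma_sets_subseteq) force

lemma meas_past_M: "f \<in> measurable (past_sigma M Y t) X \<Longrightarrow> f \<in> measurable M X"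
  by (rule measurable_sets_mono[OF sets_past_sub]) auto

lemma meas_past_mono: "s \<le> t \<Longrightarrow> f \<in> measurable (past_sigma M Y s) X \<Longrightarrow> f \<in> measurable (past_sigma M Y t) X"
  by (rule measurable_sets_mono[OF sets_past_mono]) auto

lemma Y_past: "s < t \<Longrightarrow> Y s \<in> measurable (past_sigma M Y t) (count_space UNIV)"
  unfolding measurable_def
proof safe
  fix A :: "nat set" assume "s < t"
  then have "Y s -` A \<inter> space M \<in> {Y s -` A \<inter> space M | s A. s \<le> t - 1}" by auto
  then show "Y s -` A \<inter> space (past_sigma M Y t) \<in> sets (past_sigma M Y t)"
    unfolding sets_past by auto
qed auto

abbreviation NB :: "real \<Rightarrow> nat pmf" where "NB l \<equiv> neg_binomial_pmf r (nb_prob r l)"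

lemma nb_prob_in: "l \<ge> 0 \<Longrightarrow> nb_prob r l \<in> {0<..1}"
  using r1 by (auto simp: nb_prob_def field_simps)

lemma pk_meas: "(\<lambda>\<omega>. pmf (NB (L s \<omega>)) k) \<in> borel_measurable (past_sigma M Y s)"
proof -
  have m: "(\<lambda>\<omega>. real ((k + r - 1) choose k) * (nb_prob r (L s \<omega>)) ^ r * (1 - nb_prob r (L s \<omega>)) ^ k)
        \<in> borel_measurable (past_sigma M Y s)"
    unfolding nb_prob_def using L_past[of s] by measurable
  have eq: "\<And>\<omega>. \<omega> \<in> space (past_sigma M Y s) \<Longrightarrow> pmf (NB (L s \<omega>)) k =
     real ((k + r - 1) choose k) * (nb_prob r (L s \<omega>)) ^ r * (1 - nb_prob r (L s \<omega>)) ^ k"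
  proof -
    fix \<omega> assume "\<omega> \<in> space (past_sigma M Y s)"
    then have "nb_prob r (L s \<omega>) \<in> {0<..1}" using nb_prob_in L_nonneg by simp
    from pmf_neg_binomial[OF this] show "pmf (NB (L s \<omega>)) k =
     real ((k + r - 1) choose k) * (nb_prob r (L s \<omega>)) ^ r * (1 - nb_prob r (L s \<omega>)) ^ k" .
  qed
  have "(\<lambda>\<omega>. pmf (NB (L s \<omega>)) k) \<in> borel_measurable (past_sigma M Y s) \<longleftrightarrow>
    (\<lambda>\<omega>. real ((k + r - 1) choose k) * (nb_prob r (L s \<omega>)) ^ r * (1 - nb_prob r (L s \<omega>)) ^ k)
        \<in> borel_measurable (past_sigma M Y s)"
    by (rule measurable_cong) (rule eq)
  with m show ?thesis by simp
qed

lemma key1: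
  fixes Z :: "'a \<Rightarrow> ennreal"
  assumes Z: "Z \<in> borel_measurable (past_sigma M Y s)"
  shows "(\<integral>\<^sup>+\<omega>. Z \<omega> * indicator {\<omega> \<in> space M. Y s \<omega> = k} \<omega> \<partial>M)
       = (\<integral>\<^sup>+\<omega>. Z \<omega> * ennreal (pmf (NB (L s \<omega>)) k) \<partial>M)"
  using Z
proof (induction rule: borel_measurable_induct)
  case (cong f g)
  have "(\<integral>\<^sup>+\<omega>. f \<omega> * indicator {\<omega> \<in> space M. Y s \<omega> = k} \<omega> \<partial>M)
      = (\<integral>\<^sup>+\<omega>. g \<omega> * indicator {\<omega> \<in> space M. Y s \<omega> = k} \<omega> \<partial>M)"
    using cong(3) by (auto intro!: nn_integral_cong)
  also have "\<dots> = (\<integral>\<^sup>+\<omega>. g \<omega> * ennreal (pmf (NB (L s \<omega>)) k) \<partial>M)" by (rule cong(4))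
  also have "\<dots> = (\<integral>\<^sup>+\<omega>. f \<omega> * ennreal (pmf (NB (L s \<omega>)) k) \<partial>M)"
    using cong(3) by (auto intro!: nn_integral_cong)
  finally show ?case .
next
  case (set A)
  have AM: "A \<in> sets M" using set sets_past_sub by blast
  have YkM: "{\<omega> \<in> space M. Y s \<omega> = k} \<in> sets M" using Y_meas[of s] by measurable
  have "(\<integral>\<^sup>+\<omega>. indicator A \<omega> * indicator {\<omega> \<in> space M. Y s \<omega> = k} \<omega> \<partial>M)
      = (\<integral>\<^sup>+\<omega>. indicator ({\<omega> \<in> space M. Y s \<omega> = k} \<inter> A) \<omega> \<partial>M)"
    by (auto intro!: nn_integral_cong split: split_indicator)
  also have "\<dots> = emeasure M ({\<omega> \<in> space M. Y s \<omega> = k} \<inter> A)"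
    using AM YkM by (intro nn_integral_indicator) auto
  also have "\<dots> = ennreal (measure M ({\<omega> \<in> space M. Y s \<omega> = k} \<inter> A))"
    by (rule P.emeasure_eq_measure)
  also have "\<dots> = ennreal (\<integral>\<omega>. indicator A \<omega> * pmf (NB (L s \<omega>)) k \<partial>M)"
    using cond_NB[OF set] by simp
  also have "\<dots> = (\<integral>\<^sup>+\<omega>. ennreal (indicator A \<omega> * pmf (NB (L s \<omega>)) k) \<partial>M)"
  proof (rule nn_integral_eq_integral[symmetric])
    have m: "(\<lambda>\<omega>. indicator A \<omega> * pmf (NB (L s \<omega>)) k) \<in> borel_measurable M"
      using AM meas_past_M[OF pk_meas[of s k]] by measurable
    show "integrable M (\<lambda>\<omega>. indicator A \<omega> * pmf (NB (L s \<omega>)) k)"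
      by (rule P.integrable_const_bound[where B=1]) (auto simp: m pmf_le_1 split: split_indicator)
  qed auto
  also have "\<dots> = (\<integral>\<^sup>+\<omega>. indicator A \<omega> * ennreal (pmf (NB (L s \<omega>)) k) \<partial>M)"
    by (auto intro!: nn_integral_cong split: split_indicator)
  finally show ?case .
next
  case (mult u c)
  have um: "u \<in> borel_measurable M" using meas_past_M mult by blast
  have YkM: "{\<omega> \<in> space M. Y s \<omega> = k} \<in> sets M" using Y_meas[of s] by measurable
  have pm: "(\<lambda>\<omega>. ennreal (pmf (NB (L s \<omega>)) k)) \<in> borel_measurable M"
    using meas_past_M[OF pk_meas[of s k]] by measurable
  have "(\<integral>\<^sup>+\<omega>. c * u \<omega> * indicator {\<omega> \<in> space M. Y s \<omega> = k} \<omega> \<partial>M)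
      = c * (\<integral>\<^sup>+\<omega>. u \<omega> * indicator {\<omega> \<in> space M. Y s \<omega> = k} \<omega> \<partial>M)"
    using um YkM by (subst nn_integral_cmult[symmetric]) (auto simp: mult.assoc)
  also have "\<dots> = c * (\<integral>\<^sup>+\<omega>. u \<omega> * ennreal (pmf (NB (L s \<omega>)) k) \<partial>M)"
    using mult by simp
  also have "\<dots> = (\<integral>\<^sup>+\<omega>. c * u \<omega> * ennreal (pmf (NB (L s \<omega>)) k) \<partial>M)"
    using um pm by (subst nn_integral_cmult[symmetric]) (auto simp: mult.assoc)
  finally show ?case .
next
  case (add u v)
  have um: "u \<in> borel_measurable M" "v \<in> borel_measurable M" using meas_past_M add by blast+
  have YkM: "{\<omega> \<in> space M. Y s \<omega> = k} \<in> sets M" using Y_meas[of s] by measurable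
  have pm: "(\<lambda>\<omega>. ennreal (pmf (NB (L s \<omega>)) k)) \<in> borel_measurable M"
    using meas_past_M[OF pk_meas[of s k]] by measurable
  have "(\<integral>\<^sup>+\<omega>. (v \<omega> + u \<omega>) * indicator {\<omega> \<in> space M. Y s \<omega> = k} \<omega> \<partial>M)
     = (\<integral>\<^sup>+\<omega>. v \<omega> * indicator {\<omega> \<in> space M. Y s \<omega> = k} \<omega> \<partial>M) + 
       (\<integral>\<^sup>+\<omega>. u \<omega> * indicator {\<omega> \<in> space M. Y s \<omega> = k} \<omega> \<partial>M)"
    using um YkM by (subst nn_integral_add[symmetric]) (auto simp: distrib_right)
  also have "\<dots> = (\<integral>\<^sup>+\<omega>. v \<omega> * ennreal (pmf (NB (L s \<omega>)) k) \<partial>M) + 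
       (\<integral>\<^sup>+\<omega>. u \<omega> * ennreal (pmf (NB (L s \<omega>)) k) \<partial>M)"
    using add by simp
  also have "\<dots> = (\<integral>\<^sup>+\<omega>. (v \<omega> + u \<omega>) * ennreal (pmf (NB (L s \<omega>)) k) \<partial>M)"
    using um pm by (subst nn_integral_add[symmetric]) (auto simp: distrib_right)
  finally show ?case .
next
  case (seq U)
  have um: "\<And>i. U i \<in> borel_measurable M" using meas_past_M seq by blast
  have YkM: "{\<omega> \<in> space M. Y s \<omega> = k} \<in> sets M" using Y_meas[of s] by measurable
  have pm: "(\<lambda>\<omega>. ennreal (pmf (NB (L s \<omega>)) k)) \<in> borel_measurable M"
    using meas_past_M[OF pk_meas[of s k]] by measurable
  have inc: "incseq (\<lambda>i \<omega>. U i \<omega> * g \<omega>)" for g :: "'a \<Rightarrow> ennreal"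
    using \<open>incseq U\<close> by (auto simp: incseq_def le_fun_def intro!: mult_right_mono)
  have "(\<integral>\<^sup>+\<omega>. (SUP i. U i) \<omega> * indicator {\<omega> \<in> space M. Y s \<omega> = k} \<omega> \<partial>M)
      = (\<integral>\<^sup>+\<omega>. (SUP i. U i \<omega> * indicator {\<omega> \<in> space M. Y s \<omega> = k} \<omega>) \<partial>M)"
    by (simp add: SUP_mult_right_ennreal image_comp)
  also have "\<dots> = (SUP i. \<integral>\<^sup>+\<omega>. U i \<omega> * indicator {\<omega> \<in> space M. Y s \<omega> = k} \<omega> \<partial>M)"
    using um YkM inc by (subst nn_integral_monotone_convergence_SUP) auto
  also have "\<dots> = (SUP i. \<integral>\<^sup>+\<omega>. U i \<omega> * ennreal (pmf (NB (L s \<omega>)) k) \<partial>M)"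
    using seq by simp
  also have "\<dots> = (\<integral>\<^sup>+\<omega>. (SUP i. U i \<omega> * ennreal (pmf (NB (L s \<omega>)) k)) \<partial>M)"
    using um pm inc by (subst nn_integral_monotone_convergence_SUP) auto
  also have "\<dots> = (\<integral>\<^sup>+\<omega>. (SUP i. U i) \<omega> * ennreal (pmf (NB (L s \<omega>)) k) \<partial>M)"
    by (simp add: SUP_mult_right_ennreal image_comp)
  finally show ?case .
qed

lemma key:
  fixes H :: "nat \<Rightarrow> 'a \<Rightarrow> ennreal"
  assumes H: "\<And>k. H k \<in> borel_measurable (past_sigma M Y s)"
  shows "(\<integral>\<^sup>+\<omega>. H (Y s \<omega>) \<omega> \<partial>M) = (\<integral>\<^sup>+\<omega>. (\<integral>\<^sup>+k. H k \<omega> \<partial>measure_pmf (NB (L s \<omega>))) \<partial>M)"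
proof -
  have HM: "\<And>k. H k \<in> borel_measurable M" using meas_past_M H by blast
  have YkM: "\<And>k. {\<omega> \<in> space M. Y s \<omega> = k} \<in> sets M" using Y_meas[of s] by measurable
  have pm: "\<And>k. (\<lambda>\<omega>. ennreal (pmf (NB (L s \<omega>)) k)) \<in> borel_measurable M"
    using meas_past_M[OF pk_meas] by measurable
  have "(\<integral>\<^sup>+\<omega>. H (Y s \<omega>) \<omega> \<partial>M)
      = (\<integral>\<^sup>+\<omega>. (\<Sum>k. H k \<omega> * indicator {\<omega> \<in> space M. Y s \<omega> = k} \<omega>) \<partial>M)"
  proof (rule nn_integral_cong)
    fix \<omega> assume w: "\<omega> \<in> space M"
    then have "(\<Sum>k. H k \<omega> * indicator {\<omega> \<in> space M. Y s \<omega> = k} \<omega>)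
       = (\<Sum>k\<in>{Y s \<omega>}. H k \<omega> * indicator {\<omega> \<in> space M. Y s \<omega> = k} \<omega>)"
      by (intro suminf_finite) auto
    then show "H (Y s \<omega>) \<omega> = (\<Sum>k. H k \<omega> * indicator {\<omega> \<in> space M. Y s \<omega> = k} \<omega>)"
      using w by simp
  qed
  also have "\<dots> = (\<Sum>k. \<integral>\<^sup>+\<omega>. H k \<omega> * indicator {\<omega> \<in> space M. Y s \<omega> = k} \<omega> \<partial>M)"
    by (rule nn_integral_suminf) (use HM YkM in measurable)
  also have "\<dots> = (\<Sum>k. \<integral>\<^sup>+\<omega>. H k \<omega> * ennreal (pmf (NB (L s \<omega>)) k) \<partial>M)"
    using key1[OF H] by simp
  also have "\<dots> = (\<integral>\<^sup>+\<omega>. (\<Sum>k. H k \<omega> * ennreal (pmf (NB (L s \<omega>)) k)) \<partial>M)"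
    by (rule nn_integral_suminf[symmetric]) (use HM pm in measurable)
  also have "\<dots> = (\<integral>\<^sup>+\<omega>. (\<integral>\<^sup>+k. H k \<omega> \<partial>measure_pmf (NB (L s \<omega>))) \<partial>M)"
    by (intro nn_integral_cong) (simp add: nn_integral_measure_pmf nn_integral_count_space_nat mult.commute)
  finally show ?thesis .
qed

end

lemma binom_shift: "Suc j * (j + n choose Suc j) = n * (j + n choose j)"
proof (cases n)
  case 0 then show ?thesis by simp
next
  case (Suc m)
  have "Suc j * (Suc (j + m) choose Suc j) = Suc (j + m) * (j + m choose j)"
    by (rule Suc_times_binomial)
  moreover have "Suc m * (Suc (j + m) choose j) = Suc (j + m) * (j + m choose j)"
  proof -
    have "(Suc (j + m) choose j) = (Suc (j + m) choose Suc m)"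
      by (subst binomial_symmetric) auto
    moreover have "Suc m * (Suc (j + m) choose Suc m) = Suc (j + m) * (j + m choose m)"
      by (rule Suc_times_binomial)
    moreover have "(j + m choose m) = (j + m choose j)"
      by (subst binomial_symmetric) auto
    ultimately show ?thesis by simp
  qed
  ultimately show ?thesis using Suc by simp
qed

lemma nb_shift:
  assumes p: "p \<in> {0<..1}" and n: "n \<ge> 1"
  shows "pmf (neg_binomial_pmf n p) (Suc j) * real (Suc j)
       = real n * ((1 - p) / p) * pmf (neg_binomial_pmf (Suc n) p) j"
proof -
  have b0: "real (Suc j * (Suc j + n - 1 choose Suc j)) = real (n * (j + Suc n - 1 choose j))"
    using binom_shift[of j n] n by simp
  have b: "real (Suc j) * real (Suc j + n - 1 choose Suc j) = real n * real (j + Suc n - 1 choose j)"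
    using b0 by (simp only: of_nat_mult)
  have "pmf (neg_binomial_pmf n p) (Suc j) * real (Suc j)
      = (real (Suc j) * real (Suc j + n - 1 choose Suc j)) * p ^ n * (1 - p) ^ Suc j"
    using pmf_neg_binomial[OF p] by simp
  also have "\<dots> = real n * real (j + Suc n - 1 choose j) * p ^ n * (1 - p) ^ Suc j"
    by (simp only: b)
  also have "\<dots> = real n * ((1 - p) / p) * (real (j + Suc n - 1 choose j) * p ^ Suc n * (1 - p) ^ j)"
    using p by (simp add: field_simps)
  also have "\<dots> = real n * ((1 - p) / p) * pmf (neg_binomial_pmf (Suc n) p) j"
    using pmf_neg_binomial[OF p] by simp
  finally show ?thesis .
qed

lemma ennreal_mult3: "a \<ge> 0 \<Longrightarrow> b \<ge> 0 \<Longrightarrow> c \<ge> 0 \<Longrightarrow> ennreal (a * b * c) = ennreal a * (ennreal b * ennreal c)"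
  by (simp add: ennreal_mult mult.assoc)

lemma suminf_shift_ennreal:
  fixes g :: "nat \<Rightarrow> ennreal"
  assumes "g 0 = 0"
  shows "suminf g = (\<Sum>j. g (Suc j))"
proof -
  have "(\<lambda>j. g (Suc j)) sums (\<Sum>j. g (Suc j))" by (rule summable_sums) simp
  then have "g sums ((\<Sum>j. g (Suc j)) + g 0)" by (rule sums_Suc)
  then show ?thesis using assms by (simp add: sums_unique[symmetric])
qed

lemma nb_mean:
  assumes p: "p \<in> {0<..1}"
  shows "(\<integral>\<^sup>+k. ennreal (real k) \<partial>measure_pmf (neg_binomial_pmf n p)) = ennreal (n * (1 - p) / p)"
proof -
  have e: "(\<lambda>k. ennreal (real k)) = of_nat" by (auto simp: ennreal_of_nat_eq_real_of_nat)
  show ?thesis using nn_integral_neg_binomial_pmf_real[OF p, of n] by (simp add: e)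
qed

lemma nb_second:
  assumes p: "p \<in> {0<..1}" and n: "n \<ge> 1"
  shows "(\<integral>\<^sup>+k. ennreal (real k ^ 2) \<partial>measure_pmf (neg_binomial_pmf n p))
     = ennreal (real n * ((1 - p) / p) * (1 + real (Suc n) * ((1 - p) / p)))"
proof -
  have q: "(1 - p) / p \<ge> 0" using p by auto
  let ?P = "neg_binomial_pmf n p" and ?Q = "neg_binomial_pmf (Suc n) p"
  have "(\<integral>\<^sup>+k. ennreal (real k ^ 2) \<partial>measure_pmf ?P)
      = (\<Sum>k. ennreal (pmf ?P k) * ennreal (real k ^ 2))"
    by (simp add: nn_integral_measure_pmf nn_integral_count_space_nat)
  also have "\<dots> = (\<Sum>j. ennreal (pmf ?P (Suc j)) * ennreal (real (Suc j) ^ 2))"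
    by (rule suminf_shift_ennreal) simp
  also have "\<dots> = (\<Sum>j. ennreal (real n * ((1 - p) / p)) * (ennreal (pmf ?Q j) * ennreal (real j + 1)))"
  proof (rule suminf_cong)
    fix j
    have "ennreal (pmf ?P (Suc j)) * ennreal (real (Suc j) ^ 2)
        = ennreal ((pmf ?P (Suc j) * real (Suc j)) * real (Suc j))"
      by (simp add: ennreal_mult'' power2_eq_square mult.assoc)
    also have "\<dots> = ennreal (real n * ((1 - p) / p) * pmf ?Q j * (real j + 1))"
      by (simp only: nb_shift[OF p n]) (simp add: add.commute)
    also have "\<dots> = ennreal (real n * ((1 - p) / p)) * (ennreal (pmf ?Q j) * ennreal (real j + 1))"
      using q by (intro ennreal_mult3) (auto simp del: times_divide_eq_right)
    finally show "ennreal (pmf ?P (Suc j)) * ennreal (real (Suc j) ^ 2)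
      = ennreal (real n * ((1 - p) / p)) * (ennreal (pmf ?Q j) * ennreal (real j + 1))" .
  qed
  also have "\<dots> = ennreal (real n * ((1 - p) / p)) * (\<integral>\<^sup>+j. ennreal (real j + 1) \<partial>measure_pmf ?Q)"
    by (simp add: nn_integral_measure_pmf nn_integral_count_space_nat)
  also have "(\<integral>\<^sup>+j. ennreal (real j + 1) \<partial>measure_pmf ?Q)
      = (\<integral>\<^sup>+j. ennreal (real j) \<partial>measure_pmf ?Q) + (\<integral>\<^sup>+j. 1 \<partial>measure_pmf ?Q)"
    by (subst nn_integral_add[symmetric]) (auto intro!: nn_integral_cong simp: ennreal_plus)
  also have "\<dots> = ennreal (real (Suc n) * ((1 - p) / p)) + 1"
    using nb_mean[OF p, of "Suc n"] by simp
  also have "\<dots> = ennreal (1 + real (Suc n) * ((1 - p) / p))"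
  proof -
    have X: "real (Suc n) * ((1 - p) / p) \<ge> 0" using q by (simp del: times_divide_eq_right)
    show ?thesis by (simp only: ennreal_plus[OF zero_le_one X] add.commute ennreal_1)
  qed
  also have "ennreal (real n * ((1 - p) / p)) * \<dots> = ennreal (real n * ((1 - p) / p) * (1 + real (Suc n) * ((1 - p) / p)))"
  proof -
    have A: "real n * ((1 - p) / p) \<ge> 0" and B: "1 + real (Suc n) * ((1 - p) / p) \<ge> 0"
      using q by (simp_all del: times_divide_eq_right)
    show ?thesis by (rule ennreal_mult[OF A B, symmetric])
  qed
  finally show ?thesis .
qed

lemma nb_prob_ratio:
  assumes "r \<ge> 1" "l \<ge> 0"
  shows "nb_prob r l \<in> {0<..1}" "(1 - nb_prob r l) / nb_prob r l = l / r"
proof -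
  have rl: "real r + l > 0" using assms by simp
  show "nb_prob r l \<in> {0<..1}" using assms rl by (auto simp: nb_prob_def field_simps)
  have "1 - nb_prob r l = l / (real r + l)" using rl by (simp add: nb_prob_def field_simps)
  then show "(1 - nb_prob r l) / nb_prob r l = l / r" using rl assms by (simp add: nb_prob_def)
qed

lemma nbl_mean:
  assumes "r \<ge> 1" "l \<ge> 0"
  shows "(\<integral>\<^sup>+k. ennreal (real k) \<partial>measure_pmf (neg_binomial_pmf r (nb_prob r l))) = ennreal l"
proof -
  have "real r * (1 - nb_prob r l) / nb_prob r l = real r * ((1 - nb_prob r l) / nb_prob r l)" by simp
  also have "\<dots> = l" using nb_prob_ratio[OF assms] assms by simp
  finally show ?thesis using nb_mean[OF nb_prob_ratio(1)[OF assms], of r] by simp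
qed

lemma nbl_second:
  assumes "r \<ge> 1" "l \<ge> 0"
  shows "(\<integral>\<^sup>+k. ennreal (real k ^ 2) \<partial>measure_pmf (neg_binomial_pmf r (nb_prob r l)))
       = ennreal (l + l^2 * (1 + 1 / real r))"
proof -
  have e: "(1 - nb_prob r l) / nb_prob r l = l / r" by (rule nb_prob_ratio(2)[OF assms])
  have "real r * ((1 - nb_prob r l) / nb_prob r l) * (1 + real (Suc r) * ((1 - nb_prob r l) / nb_prob r l))
     = real r * (l / r) * (1 + real (Suc r) * (l / r))" 
    by (simp only: e)
  also have "\<dots> = l + l^2 * (1 + 1 / real r)"
    using assms by (simp add: field_simps power2_eq_square)
  finally show ?thesis using nb_second[OF nb_prob_ratio(1)[OF assms] assms(1)] by simp
qed

lemma nbl_aff1: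
  assumes "r \<ge> 1" "l \<ge> 0" "u \<ge> 0" "a \<ge> 0"
  shows "(\<integral>\<^sup>+k. ennreal (u + a * real k) \<partial>measure_pmf (neg_binomial_pmf r (nb_prob r l)))
       = ennreal (u + a * l)"
proof -
  let ?P = "measure_pmf (neg_binomial_pmf r (nb_prob r l))"
  have "(\<integral>\<^sup>+k. ennreal (u + a * real k) \<partial>?P) = (\<integral>\<^sup>+k. ennreal u + ennreal a * ennreal (real k) \<partial>?P)"
    using assms by (intro nn_integral_cong) (simp add: ennreal_plus ennreal_mult)
  also have "\<dots> = (\<integral>\<^sup>+k. ennreal u \<partial>?P) + ennreal a * (\<integral>\<^sup>+k. ennreal (real k) \<partial>?P)"
    by (simp add: nn_integral_add nn_integral_cmult)
  also have "\<dots> = ennreal u + ennreal a * ennreal l"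
    using nbl_mean[OF assms(1,2)] by simp
  also have "\<dots> = ennreal (u + a * l)"
    using assms by (simp add: ennreal_plus ennreal_mult)
  finally show ?thesis .
qed

lemma nbl_aff2:
  assumes "r \<ge> 1" "l \<ge> 0" "u \<ge> 0" "a \<ge> 0"
  shows "(\<integral>\<^sup>+k. ennreal ((u + a * real k)^2) \<partial>measure_pmf (neg_binomial_pmf r (nb_prob r l)))
       = ennreal (u^2 + 2*u*a*l + a^2 * (l + l^2 * (1 + 1 / real r)))"
proof -
  let ?P = "measure_pmf (neg_binomial_pmf r (nb_prob r l))"
  have "(\<integral>\<^sup>+k. ennreal ((u + a * real k)^2) \<partial>?P) =
     (\<integral>\<^sup>+k. ennreal (u^2) + (ennreal (2*u*a) * ennreal (real k) + ennreal (a^2) * ennreal (real k ^ 2)) \<partial>?P)"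
  proof (intro nn_integral_cong)
    fix k
    have "(u + a * real k)^2 = u^2 + (2*u*a * real k + a^2 * real k ^ 2)"
      by (simp add: power2_eq_square algebra_simps)
    then show "ennreal ((u + a * real k)^2) = 
       ennreal (u^2) + (ennreal (2*u*a) * ennreal (real k) + ennreal (a^2) * ennreal (real k ^ 2))"
      using assms by (simp add: ennreal_plus ennreal_mult)
  qed
  also have "\<dots> = (\<integral>\<^sup>+k. ennreal (u^2) \<partial>?P) + (ennreal (2*u*a) * (\<integral>\<^sup>+k. ennreal (real k) \<partial>?P)
         + ennreal (a^2) * (\<integral>\<^sup>+k. ennreal (real k ^ 2) \<partial>?P))"
    by (simp add: nn_integral_add nn_integral_cmult)
  also have "\<dots> = ennreal (u^2) + (ennreal (2*u*a) * ennreal l + ennreal (a^2) * ennreal (l + l^2 * (1 + 1 / real r)))"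
    using nbl_mean[OF assms(1,2)] nbl_second[OF assms(1,2)] by simp
  also have "\<dots> = ennreal (u^2 + 2*u*a*l + a^2 * (l + l^2 * (1 + 1 / real r)))"
    using assms by (simp add: ennreal_plus ennreal_mult add.assoc)
  finally show ?thesis .
qed


lemma stat_tail:
  fixes M :: "'a measure" and Y :: "int \<Rightarrow> 'a \<Rightarrow> nat" and L :: "int \<Rightarrow> 'a \<Rightarrow> real"
  assumes st: "strictly_stationary M Y L"
    and Y_meas: "\<And>t. Y t \<in> measurable M (count_space UNIV)"
    and L_meas: "\<And>t. L t \<in> borel_measurable M"
  shows "emeasure M {\<omega> \<in> space M. L h \<omega> > R} = emeasure M {\<omega> \<in> space M. L 0 \<omega> > R}"
proof -
  let ?N = "PiM (UNIV::int set) (\<lambda>_. count_space (UNIV::nat set) \<Otimes>\<^sub>M (borel :: real measure))"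
  have fm: "(\<lambda>\<omega> i. (Y (i + g) \<omega>, L (i + g) \<omega>)) \<in> measurable M ?N" for g
    by (rule measurable_PiM_single') (use Y_meas L_meas in \<open>auto simp: space_pair_measure\<close>)
  let ?S = "{x \<in> space ?N. snd (x 0) > R}"
  have S: "?S \<in> sets ?N" by measurable
  have e: "emeasure M {\<omega> \<in> space M. L g \<omega> > R} = emeasure (distr M ?N (\<lambda>\<omega> i. (Y (i + g) \<omega>, L (i + g) \<omega>))) ?S" for g
  proof -
    have "emeasure (distr M ?N (\<lambda>\<omega> i. (Y (i + g) \<omega>, L (i + g) \<omega>))) ?S
       = emeasure M ((\<lambda>\<omega> i. (Y (i + g) \<omega>, L (i + g) \<omega>)) -` ?S \<inter> space M)"
      by (rule emeasure_distr[OF fm S])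
    also have "(\<lambda>\<omega> i. (Y (i + g) \<omega>, L (i + g) \<omega>)) -` ?S \<inter> space M = {\<omega> \<in> space M. L g \<omega> > R}"
      using measurable_space[OF fm] by auto
    finally show ?thesis by simp
  qed
  have d: "\<And>g. distr M ?N (\<lambda>\<omega> i. (Y (i + g) \<omega>, L (i + g) \<omega>)) = distr M ?N (\<lambda>\<omega> i. (Y i \<omega>, L i \<omega>))"
    using st unfolding strictly_stationary_def by blast
  have "emeasure M {\<omega> \<in> space M. L h \<omega> > R} = emeasure (distr M ?N (\<lambda>\<omega> i. (Y i \<omega>, L i \<omega>))) ?S"
    by (simp only: e[of h] d[of h])
  also have "\<dots> = emeasure M {\<omega> \<in> space M. L 0 \<omega> > R}"
    by (simp only: e[of 0] d[of 0])
  finally show ?thesis .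
qed


locale nbrec = nbproc +
  fixes c a b :: real
  assumes c0: "c \<ge> 0" and a0: "a \<ge> 0" and b0: "b \<ge> 0"
    and rec: "\<And>s \<omega>. \<omega> \<in> space M \<Longrightarrow> L (s + 1) \<omega> \<le> c + a * real (Y s \<omega>) + b * L s \<omega>"
begin

interpretation P: prob_space M by (rule prob)

lemma ind_le1: "A \<in> sets M \<Longrightarrow> (\<integral>\<^sup>+\<omega>. ennreal x * indicator A \<omega> \<partial>M) \<le> ennreal x"
  by (simp add: nn_integral_cmult_indicator P.emeasure_le_1 mult_left_le)

lemma step1:
  assumes I: "A \<in> sets (past_sigma M Y s)"
  shows "(\<integral>\<^sup>+\<omega>. indicator A \<omega> * ennreal (L (s + 1) \<omega>) \<partial>M)
     \<le> ennreal c + ennreal (a + b) * (\<integral>\<^sup>+\<omega>. indicator A \<omega> * ennreal (L s \<omega>) \<partial>M)"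
proof -
  have AM: "A \<in> sets M" using I sets_past_sub by blast
  have Lp: "L s \<in> borel_measurable (past_sigma M Y s)" by (rule L_past)
  have LM: "L s \<in> borel_measurable M" by (rule L_meas)
  have "(\<integral>\<^sup>+\<omega>. indicator A \<omega> * ennreal (L (s + 1) \<omega>) \<partial>M)
     \<le> (\<integral>\<^sup>+\<omega>. indicator A \<omega> * ennreal ((c + b * L s \<omega>) + a * real (Y s \<omega>)) \<partial>M)"
  proof (intro nn_integral_mono mult_left_mono ennreal_leI)
    fix \<omega> assume w: "\<omega> \<in> space M"
    show "L (s + 1) \<omega> \<le> (c + b * L s \<omega>) + a * real (Y s \<omega>)" using rec[OF w, of s] by (simp add: algebra_simps)
  qed auto
  also have "\<dots> = (\<integral>\<^sup>+\<omega>. (\<integral>\<^sup>+k. indicator A \<omega> * ennreal ((c + b * L s \<omega>) + a * real k) \<partial>measure_pmf (NB (L s \<omega>))) \<partial>M)"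
    by (rule key[where H="\<lambda>k \<omega>. indicator A \<omega> * ennreal ((c + b * L s \<omega>) + a * real k)"])
       (use I Lp in measurable)
  also have "\<dots> = (\<integral>\<^sup>+\<omega>. ennreal c * indicator A \<omega> + ennreal (a + b) * (indicator A \<omega> * ennreal (L s \<omega>)) \<partial>M)"
  proof (intro nn_integral_cong)
    fix \<omega> assume w: "\<omega> \<in> space M"
    have l0: "L s \<omega> \<ge> 0" using L_nonneg[OF w] .
    have u0: "c + b * L s \<omega> \<ge> 0" using l0 c0 b0 by simp
    have "(\<integral>\<^sup>+k. indicator A \<omega> * ennreal ((c + b * L s \<omega>) + a * real k) \<partial>measure_pmf (NB (L s \<omega>)))
       = indicator A \<omega> * (\<integral>\<^sup>+k. ennreal ((c + b * L s \<omega>) + a * real k) \<partial>measure_pmf (NB (L s \<omega>)))"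
      by (rule nn_integral_cmult) simp
    also have "\<dots> = indicator A \<omega> * ennreal ((c + b * L s \<omega>) + a * L s \<omega>)"
      by (simp only: nbl_aff1[OF r1 l0 u0 a0])
    also have "\<dots> = ennreal c * indicator A \<omega> + ennreal (a + b) * (indicator A \<omega> * ennreal (L s \<omega>))"
    proof -
      have "(c + b * L s \<omega>) + a * L s \<omega> = c + (a + b) * L s \<omega>" by (simp add: algebra_simps)
      then show ?thesis using l0 c0 a0 b0
        by (cases "\<omega> \<in> A") (simp_all add: ennreal_plus ennreal_mult distrib_right add.commute)
    qed
    finally show "(\<integral>\<^sup>+k. indicator A \<omega> * ennreal ((c + b * L s \<omega>) + a * real k) \<partial>measure_pmf (NB (L s \<omega>)))
       = ennreal c * indicator A \<omega> + ennreal (a + b) * (indicator A \<omega> * ennreal (L s \<omega>))" .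
  qed
  also have "\<dots> = (\<integral>\<^sup>+\<omega>. ennreal c * indicator A \<omega> \<partial>M) + ennreal (a + b) * (\<integral>\<^sup>+\<omega>. indicator A \<omega> * ennreal (L s \<omega>) \<partial>M)"
    using AM LM by (simp add: nn_integral_add nn_integral_cmult)
  also have "\<dots> \<le> ennreal c + ennreal (a + b) * (\<integral>\<^sup>+\<omega>. indicator A \<omega> * ennreal (L s \<omega>) \<partial>M)"
    using ind_le1[OF AM] by (rule add_right_mono)
  finally show ?thesis .
qed

definition "D = 2 * b * c + 2 * a * c + a^2"
definition "\<rho> = (a + b)^2 + a^2 / real r"

lemma step2:
  assumes I: "A \<in> sets (past_sigma M Y s)"
  shows "(\<integral>\<^sup>+\<omega>. indicator A \<omega> * ennreal ((L (s + 1) \<omega>)^2) \<partial>M)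
     \<le> ennreal (c^2) + ennreal D * (\<integral>\<^sup>+\<omega>. indicator A \<omega> * ennreal (L s \<omega>) \<partial>M)
        + ennreal \<rho> * (\<integral>\<^sup>+\<omega>. indicator A \<omega> * ennreal ((L s \<omega>)^2) \<partial>M)"
proof -
  have AM: "A \<in> sets M" using I sets_past_sub by blast
  have Lp: "L s \<in> borel_measurable (past_sigma M Y s)" by (rule L_past)
  have LM: "L s \<in> borel_measurable M" by (rule L_meas)
  have D0: "D \<ge> 0" and rho0: "\<rho> \<ge> 0" using a0 b0 c0 by (auto simp: D_def \<rho>_def)
  have "(\<integral>\<^sup>+\<omega>. indicator A \<omega> * ennreal ((L (s + 1) \<omega>)^2) \<partial>M)
     \<le> (\<integral>\<^sup>+\<omega>. indicator A \<omega> * ennreal (((c + b * L s \<omega>) + a * real (Y s \<omega>))^2) \<partial>M)"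
  proof (intro nn_integral_mono mult_left_mono ennreal_leI power_mono)
    fix \<omega> assume w: "\<omega> \<in> space M"
    show "L (s + 1) \<omega> \<le> (c + b * L s \<omega>) + a * real (Y s \<omega>)" using rec[OF w, of s] by (simp add: algebra_simps)
    show "0 \<le> L (s + 1) \<omega>" using L_nonneg[OF w] .
  qed auto
  also have "\<dots> = (\<integral>\<^sup>+\<omega>. (\<integral>\<^sup>+k. indicator A \<omega> * ennreal (((c + b * L s \<omega>) + a * real k)^2) \<partial>measure_pmf (NB (L s \<omega>))) \<partial>M)"
    by (rule key[where H="\<lambda>k \<omega>. indicator A \<omega> * ennreal (((c + b * L s \<omega>) + a * real k)^2)"])
       (use I Lp in measurable)
  also have "\<dots> = (\<integral>\<^sup>+\<omega>. ennreal (c^2) * indicator A \<omega> + (ennreal D * (indicator A \<omega> * ennreal (L s \<omega>))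
        + ennreal \<rho> * (indicator A \<omega> * ennreal ((L s \<omega>)^2))) \<partial>M)"
  proof (intro nn_integral_cong)
    fix \<omega> assume w: "\<omega> \<in> space M"
    define l where "l = L s \<omega>"
    have l0: "l \<ge> 0" using L_nonneg[OF w] by (simp add: l_def)
    have "(\<integral>\<^sup>+k. indicator A \<omega> * ennreal (((c + b * L s \<omega>) + a * real k)^2) \<partial>measure_pmf (NB (L s \<omega>)))
       = indicator A \<omega> * ennreal ((c + b * l)^2 + 2 * (c + b * l) * a * l + a^2 * (l + l^2 * (1 + 1 / real r)))"
    proof -
      have u0: "c + b * l \<ge> 0" using l0 c0 b0 by simp
      have "(\<integral>\<^sup>+k. indicator A \<omega> * ennreal (((c + b * l) + a * real k)^2) \<partial>measure_pmf (NB l))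
       = indicator A \<omega> * (\<integral>\<^sup>+k. ennreal (((c + b * l) + a * real k)^2) \<partial>measure_pmf (NB l))"
        by (rule nn_integral_cmult) simp
      also have "\<dots> = indicator A \<omega> * ennreal ((c + b * l)^2 + 2 * (c + b * l) * a * l + a^2 * (l + l^2 * (1 + 1 / real r)))"
        by (simp only: nbl_aff2[OF r1 l0 u0 a0])
      finally show ?thesis by (simp only: l_def)
    qed
    also have "(c + b * l)^2 + 2 * (c + b * l) * a * l + a^2 * (l + l^2 * (1 + 1 / real r))
       = c^2 + (D * l + \<rho> * l^2)"
    proof -
      have gen: "\<And>x::real. (c + b * l)^2 + 2 * (c + b * l) * a * l + a^2 * (l + l^2 * (1 + x))
           = c^2 + ((2 * b * c + 2 * a * c + a^2) * l + ((a + b)^2 + a^2 * x) * l^2)"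
        by (simp add: power2_eq_square algebra_simps)
      show ?thesis unfolding D_def \<rho>_def using gen[of "1 / real r"] by simp
    qed
    also have "indicator A \<omega> * ennreal (c^2 + (D * l + \<rho> * l^2))
       = ennreal (c^2) * indicator A \<omega> + (ennreal D * (indicator A \<omega> * ennreal l)
        + ennreal \<rho> * (indicator A \<omega> * ennreal (l^2)))"
      using l0 D0 rho0 c0
      by (cases "\<omega> \<in> A") (simp_all add: ennreal_plus ennreal_mult)
    finally show "(\<integral>\<^sup>+k. indicator A \<omega> * ennreal (((c + b * L s \<omega>) + a * real k)^2) \<partial>measure_pmf (NB (L s \<omega>)))
       = ennreal (c^2) * indicator A \<omega> + (ennreal D * (indicator A \<omega> * ennreal (L s \<omega>))
        + ennreal \<rho> * (indicator A \<omega> * ennreal ((L s \<omega>)^2)))" by (simp add: l_def)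
  qed
  also have "\<dots> = (\<integral>\<^sup>+\<omega>. ennreal (c^2) * indicator A \<omega> \<partial>M) + (ennreal D * (\<integral>\<^sup>+\<omega>. indicator A \<omega> * ennreal (L s \<omega>) \<partial>M)
        + ennreal \<rho> * (\<integral>\<^sup>+\<omega>. indicator A \<omega> * ennreal ((L s \<omega>)^2) \<partial>M))"
    using AM LM by (simp add: nn_integral_add nn_integral_cmult)
  also have "\<dots> \<le> ennreal (c^2) + (ennreal D * (\<integral>\<^sup>+\<omega>. indicator A \<omega> * ennreal (L s \<omega>) \<partial>M)
        + ennreal \<rho> * (\<integral>\<^sup>+\<omega>. indicator A \<omega> * ennreal ((L s \<omega>)^2) \<partial>M))"
    using ind_le1[OF AM] by (rule add_right_mono)
  finally show ?thesis by (simp add: add.assoc)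
qed

lemma D0: "D \<ge> 0" and rho0: "\<rho> \<ge> 0" using a0 b0 c0 by (auto simp: D_def \<rho>_def)

lemma A_past:
  assumes "t0 \<le> s"
  shows "{\<omega> \<in> space M. L t0 \<omega> \<le> R} \<in> sets (past_sigma M Y s)"
proof -
  have "{\<omega> \<in> space (past_sigma M Y t0). L t0 \<omega> \<le> R} \<in> sets (past_sigma M Y t0)"
    using L_past[of t0] by measurable
  then show ?thesis using sets_past_mono[OF assms] by auto
qed

lemma bounds:
  fixes t0 :: int and R q :: real
  assumes R0: "R \<ge> 0" and q1: "a + b \<le> q" and q2: "\<rho> < q" and q3: "q < 1"
  shows "(\<integral>\<^sup>+\<omega>. indicator {\<omega> \<in> space M. L t0 \<omega> \<le> R} \<omega> * ennreal (L (t0 + int j) \<omega>) \<partial>M)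
            \<le> ennreal (q^j * R + c / (1 - (a + b)))
       \<and> (\<integral>\<^sup>+\<omega>. indicator {\<omega> \<in> space M. L t0 \<omega> \<le> R} \<omega> * ennreal ((L (t0 + int j) \<omega>)^2) \<partial>M)
           \<le> ennreal (q^j * (R^2 + D * R / (q - \<rho>)) + (c^2 + D * (c / (1 - (a + b)))) / (1 - \<rho>))"
proof (induction j)
  define A where "A = {\<omega> \<in> space M. L t0 \<omega> \<le> R}"
  define C0 where "C0 = c / (1 - (a + b))"
  define C2 where "C2 = (c^2 + D * C0) / (1 - \<rho>)"
  define B where "B = R^2 + D * R / (q - \<rho>)"
  have ab1: "a + b < 1" using q1 q3 by simp
  have C00: "C0 \<ge> 0" using c0 ab1 by (simp add: C0_def)
  have C20: "C2 \<ge> 0" using c0 C00 D0 q2 q3 by (simp add: C2_def)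
  have B0: "B \<ge> R^2" using D0 R0 q2 by (simp add: B_def)
  have AM: "A \<in> sets M" unfolding A_def using L_meas[of t0] by measurable
  case 0
  have "(\<integral>\<^sup>+\<omega>. indicator A \<omega> * ennreal (L t0 \<omega>) \<partial>M) \<le> (\<integral>\<^sup>+\<omega>. ennreal R * indicator A \<omega> \<partial>M)"
    by (intro nn_integral_mono) (auto simp: A_def split: split_indicator intro: ennreal_leI)
  also have "\<dots> \<le> ennreal R" using ind_le1[OF AM] .
  also have "\<dots> \<le> ennreal (q^0 * R + C0)" using C00 by (intro ennreal_leI) simp
  finally have 1: "(\<integral>\<^sup>+\<omega>. indicator A \<omega> * ennreal (L t0 \<omega>) \<partial>M) \<le> ennreal (q^0 * R + C0)" .
  have "(\<integral>\<^sup>+\<omega>. indicator A \<omega> * ennreal ((L t0 \<omega>)^2) \<partial>M) \<le> (\<integral>\<^sup>+\<omega>. ennreal (R^2) * indicator A \<omega> \<partial>M)"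
    by (intro nn_integral_mono) (auto simp: A_def split: split_indicator intro!: ennreal_leI power_mono L_nonneg)
  also have "\<dots> \<le> ennreal (R^2)" using ind_le1[OF AM] .
  also have "\<dots> \<le> ennreal (q^0 * B + C2)" using C20 B0 by (intro ennreal_leI) simp
  finally have 2: "(\<integral>\<^sup>+\<omega>. indicator A \<omega> * ennreal ((L t0 \<omega>)^2) \<partial>M) \<le> ennreal (q^0 * B + C2)" .
  from 1 2 show ?case by (simp add: A_def C0_def C2_def B_def)
next
  case (Suc j)
  define A where "A = {\<omega> \<in> space M. L t0 \<omega> \<le> R}"
  define C0 where "C0 = c / (1 - (a + b))"
  define C2 where "C2 = (c^2 + D * C0) / (1 - \<rho>)"
  define B where "B = R^2 + D * R / (q - \<rho>)"
  define s where "s = t0 + int j"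
  have ab1: "a + b < 1" using q1 q3 by simp
  have q0: "q \<ge> 0" using a0 b0 q1 by simp
  have C00: "C0 \<ge> 0" using c0 ab1 by (simp add: C0_def)
  have C20: "C2 \<ge> 0" using c0 C00 D0 q2 q3 by (simp add: C2_def)
  have B0: "B \<ge> R^2" using D0 R0 q2 by (simp add: B_def)
  have ss: "t0 + int (Suc j) = s + 1" by (simp add: s_def)
  have As: "A \<in> sets (past_sigma M Y s)" unfolding A_def by (rule A_past) (simp add: s_def)
  have IH1: "(\<integral>\<^sup>+\<omega>. indicator A \<omega> * ennreal (L s \<omega>) \<partial>M) \<le> ennreal (q^j * R + C0)"
    and IH2: "(\<integral>\<^sup>+\<omega>. indicator A \<omega> * ennreal ((L s \<omega>)^2) \<partial>M) \<le> ennreal (q^j * B + C2)"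
    using Suc.IH by (simp_all add: A_def C0_def C2_def B_def s_def)
  have qjR: "q^j * R \<ge> 0" using q0 R0 by simp
  have qjB: "q^j * B \<ge> 0" using q0 B0 by (simp add: order_trans[OF zero_le_power2 B0])
  have "(\<integral>\<^sup>+\<omega>. indicator A \<omega> * ennreal (L (s + 1) \<omega>) \<partial>M)
     \<le> ennreal c + ennreal (a + b) * (\<integral>\<^sup>+\<omega>. indicator A \<omega> * ennreal (L s \<omega>) \<partial>M)"
    by (rule step1[OF As])
  also have "\<dots> \<le> ennreal c + ennreal (a + b) * ennreal (q^j * R + C0)"
    by (intro add_left_mono mult_left_mono IH1) simp
  also have "\<dots> = ennreal (c + (a + b) * (q^j * R + C0))"
    using c0 a0 b0 qjR C00 by (simp add: ennreal_plus ennreal_mult)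
  also have "\<dots> \<le> ennreal (q^Suc j * R + C0)"
  proof (intro ennreal_leI)
    have "(a + b) * (q^j * R) \<le> q * (q^j * R)" using q1 qjR by (rule mult_right_mono)
    moreover have "c + (a + b) * C0 = C0" using ab1 by (simp add: C0_def field_simps)
    ultimately show "c + (a + b) * (q^j * R + C0) \<le> q^Suc j * R + C0"
      by (simp add: algebra_simps)
  qed
  finally have 1: "(\<integral>\<^sup>+\<omega>. indicator A \<omega> * ennreal (L (s + 1) \<omega>) \<partial>M) \<le> ennreal (q^Suc j * R + C0)" .
  have "(\<integral>\<^sup>+\<omega>. indicator A \<omega> * ennreal ((L (s + 1) \<omega>)^2) \<partial>M)
     \<le> ennreal (c^2) + ennreal D * (\<integral>\<^sup>+\<omega>. indicator A \<omega> * ennreal (L s \<omega>) \<partial>M)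
        + ennreal \<rho> * (\<integral>\<^sup>+\<omega>. indicator A \<omega> * ennreal ((L s \<omega>)^2) \<partial>M)"
    by (rule step2[OF As])
  also have "\<dots> \<le> ennreal (c^2) + ennreal D * ennreal (q^j * R + C0) + ennreal \<rho> * ennreal (q^j * B + C2)"
    by (intro add_mono add_left_mono mult_left_mono IH1 IH2) simp_all
  also have "\<dots> = ennreal (c^2 + D * (q^j * R + C0) + \<rho> * (q^j * B + C2))"
    using D0 rho0 qjR qjB C00 C20 by (simp add: ennreal_plus ennreal_mult)
  also have "\<dots> \<le> ennreal (q^Suc j * B + C2)"
  proof (intro ennreal_leI)
    have "(q - \<rho>) * B = (q - \<rho>) * R^2 + D * R" using q2 by (simp add: B_def field_simps)
    moreover have "(q - \<rho>) * R^2 \<ge> 0" using q2 by simp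
    ultimately have "D * R + \<rho> * B \<le> q * B" by (simp add: algebra_simps)
    then have "q^j * (D * R + \<rho> * B) \<le> q^j * (q * B)" using q0 by (intro mult_left_mono) simp_all
    moreover have "c^2 + D * C0 + \<rho> * C2 = C2" using q2 q3 by (simp add: C2_def field_simps)
    ultimately show "c^2 + D * (q^j * R + C0) + \<rho> * (q^j * B + C2) \<le> q^Suc j * B + C2"
      by (simp add: algebra_simps)
  qed
  finally have 2: "(\<integral>\<^sup>+\<omega>. indicator A \<omega> * ennreal ((L (s + 1) \<omega>)^2) \<partial>M) \<le> ennreal (q^Suc j * B + C2)" .
  from 1 2 show ?case unfolding ss by (simp add: A_def C0_def C2_def B_def)
qed

lemma sup_min:
  assumes "x \<ge> 0"
  shows "(SUP N::nat. ennreal (min x (real N))) = ennreal x"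
proof (rule antisym)
  show "(SUP N::nat. ennreal (min x (real N))) \<le> ennreal x"
    by (rule SUP_least) (simp add: ennreal_leI)
  obtain N :: nat where N: "x \<le> real N" using real_arch_simple by blast
  then have "ennreal x = ennreal (min x (real N))" by simp
  also have "\<dots> \<le> (SUP N::nat. ennreal (min x (real N)))" by (rule SUP_upper) simp
  finally show "ennreal x \<le> (SUP N::nat. ennreal (min x (real N)))" .
qed

lemma L2_finite:
  assumes ab: "a + b < 1" and rho1: "\<rho> < 1"
    and stat: "\<And>h R. emeasure M {\<omega> \<in> space M. L h \<omega> > R} = emeasure M {\<omega> \<in> space M. L 0 \<omega> > R}"
  shows "(\<integral>\<^sup>+\<omega>. ennreal ((L t \<omega>)^2) \<partial>M) < \<infinity>"
proof -
  define q where "q = max (a + b) ((1 + \<rho>) / 2)"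
  have h: "\<rho> < (1 + \<rho>) / 2" using rho1 by simp
  have q1: "a + b \<le> q" and q2: "\<rho> < q" and q3: "q < 1" and q0: "0 \<le> q"
    using ab rho1 a0 b0 h by (auto simp: q_def less_max_iff_disj)
  define C2 where "C2 = (c^2 + D * (c / (1 - (a + b)))) / (1 - \<rho>)"
  have trunc: "(\<integral>\<^sup>+\<omega>. ennreal (min ((L t \<omega>)^2) (real N)) \<partial>M) \<le> ennreal (C2 + 2)" for N :: nat
  proof -
    define G where "G = (\<lambda>i::nat. {\<omega> \<in> space M. L 0 \<omega> > real i})"
    have Gs: "range G \<subseteq> sets M" using L_meas[of 0] by (auto simp: G_def)
    have dec: "decseq G" unfolding decseq_def G_def by auto
    have inter: "(\<Inter>i. G i) = {}"
    proof safe
      fix \<omega> assume "\<omega> \<in> (\<Inter>i. G i)"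
      moreover obtain i :: nat where "L 0 \<omega> \<le> real i" using real_arch_simple by blast
      ultimately show "\<omega> \<in> {}" by (auto simp: G_def dest: spec[of _ i])
    qed
    have lim: "(\<lambda>i. measure M (G i)) \<longlonglongrightarrow> 0"
      using P.finite_Lim_measure_decseq[OF Gs dec] inter by simp
    have "eventually (\<lambda>i. measure M (G i) < 1 / (real N + 1)) sequentially"
      by (rule order_tendstoD(2)[OF lim]) simp
    then obtain i where i: "measure M (G i) < 1 / (real N + 1)"
      by (auto simp: eventually_sequentially)
    define R where "R = real i"
    have R0: "R \<ge> 0" by (simp add: R_def)
    define B where "B = R^2 + D * R / (q - \<rho>)"
    have "(\<lambda>n. q^n * B) \<longlonglongrightarrow> 0"
      by (rule tendsto_mult_left_zero) (rule LIMSEQ_power_zero, use q0 q3 in simp)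
    then have "eventually (\<lambda>n. q^n * B < 1) sequentially"
      by (rule order_tendstoD(2)) simp
    then obtain n where n: "q^n * B < 1" by (auto simp: eventually_sequentially)
    define t0 where "t0 = t - int n"
    have tt: "t0 + int n = t" by (simp add: t0_def)
    define A where "A = {\<omega> \<in> space M. L t0 \<omega> \<le> R}"
    define Ac where "Ac = {\<omega> \<in> space M. L t0 \<omega> > R}"
    have AcM: "Ac \<in> sets M" unfolding Ac_def using L_meas[of t0] by measurable
    have m: "(\<integral>\<^sup>+\<omega>. indicator A \<omega> * ennreal ((L t \<omega>)^2) \<partial>M) \<le> ennreal (q^n * B + C2)"
      using bounds[OF R0 q1 q2 q3, of t0 n] unfolding tt by (simp add: A_def B_def C2_def)
    have em: "emeasure M Ac = ennreal (measure M (G i))"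
    proof -
      have "emeasure M {\<omega> \<in> space M. L t0 \<omega> > R} = emeasure M {\<omega> \<in> space M. L 0 \<omega> > R}"
        by (rule stat)
      then show ?thesis unfolding Ac_def by (simp add: G_def R_def P.emeasure_eq_measure)
    qed
    have "(\<integral>\<^sup>+\<omega>. ennreal (min ((L t \<omega>)^2) (real N)) \<partial>M)
        \<le> (\<integral>\<^sup>+\<omega>. indicator A \<omega> * ennreal ((L t \<omega>)^2) + ennreal (real N) * indicator Ac \<omega> \<partial>M)"
      by (intro nn_integral_mono) (auto simp: A_def Ac_def split: split_indicator intro: ennreal_leI)
    also have "\<dots> = (\<integral>\<^sup>+\<omega>. indicator A \<omega> * ennreal ((L t \<omega>)^2) \<partial>M) + ennreal (real N) * emeasure M Ac"
      using AcM L_meas[of t] L_meas[of t0]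
      by (subst nn_integral_add) (auto simp: A_def nn_integral_cmult_indicator)
    also have "\<dots> \<le> ennreal (q^n * B + C2) + ennreal (real N) * ennreal (1 / (real N + 1))"
      unfolding em using i by (intro add_mono m mult_left_mono ennreal_leI) auto
    also have "\<dots> = ennreal (q^n * B + C2 + real N * (1 / (real N + 1)))"
    proof -
      have "q^n * B \<ge> 0" using q0 R0 D0 q2 by (simp add: B_def)
      moreover have "C2 \<ge> 0" using c0 D0 ab rho1 by (simp add: C2_def)
      ultimately show ?thesis by (simp add: ennreal_plus ennreal_mult del: times_divide_eq_right)
    qed
    also have "\<dots> \<le> ennreal (C2 + 2)"
    proof (intro ennreal_leI)
      have "real N * (1 / (real N + 1)) \<le> 1" by (simp add: field_simps)
      then show "q^n * B + C2 + real N * (1 / (real N + 1)) \<le> C2 + 2" using n by linarith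
    qed
    finally show ?thesis .
  qed
  have "(\<integral>\<^sup>+\<omega>. ennreal ((L t \<omega>)^2) \<partial>M) = (\<integral>\<^sup>+\<omega>. (SUP N::nat. ennreal (min ((L t \<omega>)^2) (real N))) \<partial>M)"
    by (intro nn_integral_cong) (simp add: sup_min)
  also have "\<dots> = (SUP N::nat. \<integral>\<^sup>+\<omega>. ennreal (min ((L t \<omega>)^2) (real N)) \<partial>M)"
  proof (rule nn_integral_monotone_convergence_SUP)
    show "incseq (\<lambda>N \<omega>. ennreal (min ((L t \<omega>)^2) (real N)))"
      by (auto simp: incseq_def le_fun_def intro!: ennreal_leI)
    show "\<And>N. (\<lambda>\<omega>. ennreal (min ((L t \<omega>)^2) (real N))) \<in> borel_measurable M"
      using L_meas[of t] by measurable
  qed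
  also have "\<dots> \<le> ennreal (C2 + 2)" by (rule SUP_least) (rule trunc)
  finally show ?thesis by (simp add: le_less_trans)
qed

lemma Y2_finite:
  assumes L2: "(\<integral>\<^sup>+\<omega>. ennreal ((L t \<omega>)^2) \<partial>M) < \<infinity>"
  shows "(\<integral>\<^sup>+\<omega>. ennreal ((real (Y t \<omega>))^2) \<partial>M) < \<infinity>"
proof -
  define K where "K = 2 + 1 / real r"
  have K0: "K \<ge> 0" by (simp add: K_def)
  have "(\<integral>\<^sup>+\<omega>. ennreal ((real (Y t \<omega>))^2) \<partial>M)
      = (\<integral>\<^sup>+\<omega>. (\<integral>\<^sup>+k. ennreal (real k ^ 2) \<partial>measure_pmf (NB (L t \<omega>))) \<partial>M)"
    by (rule key[where H="\<lambda>k \<omega>. ennreal (real k ^ 2)"]) simp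
  also have "\<dots> = (\<integral>\<^sup>+\<omega>. ennreal (L t \<omega> + (L t \<omega>)^2 * (1 + 1 / real r)) \<partial>M)"
    by (intro nn_integral_cong) (simp add: nbl_second[OF r1 L_nonneg])
  also have "\<dots> \<le> (\<integral>\<^sup>+\<omega>. ennreal K + ennreal K * ennreal ((L t \<omega>)^2) \<partial>M)"
  proof (intro nn_integral_mono)
    fix \<omega> assume w: "\<omega> \<in> space M"
    define l where "l = L t \<omega>"
    have l0: "l \<ge> 0" using L_nonneg[OF w] by (simp add: l_def)
    have sq: "(l - 1)^2 = l^2 - 2 * l + 1" by (simp add: power2_eq_square algebra_simps)
    have "0 \<le> (l - 1)^2" by simp
    then have "l \<le> 1 + l^2" using l0 sq by linarith
    moreover have "l^2 * (1 + 1 / real r) \<le> (1 + 1 / real r) * l^2" by simp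
    moreover have rr: "0 \<le> 1 / real r" by simp
    moreover have e: "K + K * l^2 - (l + l^2 * (1 + 1 / real r)) = (1 + l^2 - l) + 1 + 1 / real r"
      by (simp add: K_def algebra_simps)
    ultimately have "l + l^2 * (1 + 1 / real r) \<le> K + K * l^2" by linarith
    then have "ennreal (l + l^2 * (1 + 1 / real r)) \<le> ennreal (K + K * l^2)" by (rule ennreal_leI)
    also have "\<dots> = ennreal K + ennreal K * ennreal (l^2)" using K0 by (simp add: ennreal_plus ennreal_mult)
    finally show "ennreal (L t \<omega> + (L t \<omega>)^2 * (1 + 1 / real r)) \<le> ennreal K + ennreal K * ennreal ((L t \<omega>)^2)"
      by (simp add: l_def)
  qed
  also have "\<dots> = ennreal K + ennreal K * (\<integral>\<^sup>+\<omega>. ennreal ((L t \<omega>)^2) \<partial>M)"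
    using L_meas[of t] by (simp add: nn_integral_add nn_integral_cmult P.emeasure_space_1)
  also have "\<dots> < \<infinity>" using L2 by (simp add: ennreal_mult_less_top)
  finally show ?thesis .
qed

end
theorem proposition2:
  fixes M :: "'a measure"
    and r :: nat
    and \<Theta> :: "'p::topological_space set"
    and \<theta>s :: 'p
    and f :: "'p \<Rightarrow> nat \<Rightarrow> real \<Rightarrow> real"
    and a b :: real
    and Y :: "int \<Rightarrow> 'a \<Rightarrow> nat"
    and L :: "int \<Rightarrow> 'a \<Rightarrow> real"
  assumes "prob_space M"
    and "r \<ge> 1"
    and "compact \<Theta>" and "\<theta>s \<in> \<Theta>"
    and f_meas: "\<And>\<theta>. \<theta> \<in> \<Theta> \<Longrightarrow>
         (\<lambda>(y, l). f \<theta> y l) \<in> borel_measurable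
            (restrict_space (count_space UNIV \<Otimes>\<^sub>M borel) (UNIV \<times> {0..}))"
    and f_nonneg: "\<And>\<theta> y l. \<theta> \<in> \<Theta> \<Longrightarrow> l \<ge> 0 \<Longrightarrow> f \<theta> y l \<ge> 0"
    and "a \<ge> 0" and "b \<ge> 0" and "a + b < 1"
    and contr: "\<And>\<theta> y l y' l'. \<theta> \<in> \<Theta> \<Longrightarrow> l \<ge> 0 \<Longrightarrow> l' \<ge> 0 \<Longrightarrow>
         \<bar>f \<theta> y l - f \<theta> y' l'\<bar> \<le> a * \<bar>real y - real y'\<bar> + b * \<bar>l - l'\<bar>"
    and Y_meas: "\<And>t. Y t \<in> measurable M (count_space UNIV)"
    and L_meas: "\<And>t. L t \<in> borel_measurable M"
    and L_nonneg: "\<And>t \<omega>. \<omega> \<in> space M \<Longrightarrow> L t \<omega> \<ge> 0"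
    and L_rec: "\<And>t \<omega>. \<omega> \<in> space M \<Longrightarrow> L t \<omega> = f \<theta>s (Y (t - 1) \<omega>) (L (t - 1) \<omega>)"
    and L_past: "\<And>t. L t \<in> borel_measurable (past_sigma M Y t)"
    and cond_NB: "\<And>t k A. A \<in> sets (past_sigma M Y t) \<Longrightarrow>
         measure M ({\<omega> \<in> space M. Y t \<omega> = k} \<inter> A)
           = (\<integral>\<omega>. indicator A \<omega> * pmf (neg_binomial_pmf r (nb_prob r (L t \<omega>))) k \<partial>M)"
    and "strictly_stationary M Y L"
    and "(a + b)\<^sup>2 + a\<^sup>2 / real r < 1"
  shows "\<forall>t. (\<integral>\<^sup>+ \<omega>. ennreal ((real (Y t \<omega>))\<^sup>2) \<partial>M) < \<infinity>"
proof -
  interpret P: prob_space M by (rule assms(1))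
  have c0: "f \<theta>s 0 0 \<ge> 0" using f_nonneg[OF assms(4)] by simp
  have rec: "L (s + 1) \<omega> \<le> f \<theta>s 0 0 + a * real (Y s \<omega>) + b * L s \<omega>" if w: "\<omega> \<in> space M" for s \<omega>
  proof -
    have e: "L (s + 1) \<omega> = f \<theta>s (Y s \<omega>) (L s \<omega>)" using L_rec[OF w, of "s + 1"] by simp
    have l0: "L s \<omega> \<ge> 0" using L_nonneg[OF w] .
    have "\<bar>f \<theta>s (Y s \<omega>) (L s \<omega>) - f \<theta>s 0 0\<bar> \<le> a * \<bar>real (Y s \<omega>) - real 0\<bar> + b * \<bar>L s \<omega> - 0\<bar>"
      by (rule contr[OF assms(4) l0 order_refl])
    then show ?thesis using e l0 by simp
  qed
  have np: "nbproc M Y L r"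
    by (rule nbproc.intro[OF assms(1) assms(2) Y_meas L_meas L_nonneg L_past cond_NB])
  interpret nbproc M Y L r by (rule np)
  interpret nbrec M Y L r "f \<theta>s 0 0" a b
  proof unfold_locales
    show "0 \<le> f \<theta>s 0 0" by (rule c0)
    show "0 \<le> a" by (rule assms(7))
    show "0 \<le> b" by (rule assms(8))
    show "\<And>s \<omega>. \<omega> \<in> space M \<Longrightarrow> L (s + 1) \<omega> \<le> f \<theta>s 0 0 + a * real (Y s \<omega>) + b * L s \<omega>"
      by (rule rec)
  qed
  have stat: "\<And>h R. emeasure M {\<omega> \<in> space M. L h \<omega> > R} = emeasure M {\<omega> \<in> space M. L 0 \<omega> > R}"
    by (rule stat_tail[OF assms(17) Y_meas L_meas])
  have rho1: "\<rho> < 1" using assms(18) by (simp add: \<rho>_def)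
  show ?thesis
  proof
    fix t
    show "(\<integral>\<^sup>+ \<omega>. ennreal ((real (Y t \<omega>))\<^sup>2) \<partial>M) < \<infinity>"
      by (rule Y2_finite[OF L2_finite[OF assms(9) rho1 stat]])
  qed
qed

end
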